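(* Let $\alpha$ be a non-integer real number and $m\ge1$ an integer with $m\ge1+\alpha$, and let $\phi$ be $m$ times continuously differentiable on $(0,1]$. Suppose there exist finite constants $W>0$, $c_m$, $c'_m$ such that for all $p\in(0,1]$ $$|\phi^{(m)}(p)|\le\alpha_{m-1}Wp^{\alpha-m}+c_m\quad\text{and}\quad|\phi^{(m)}(p)|\ge\alpha_{m-1}Wp^{\alpha-m}+c'_m.$$ Then there exist finite constants $c_{m-1}$, $c'_{m-1}$ such that for all $p\in(0,1]$ $$|\phi^{(m-1)}(p)|\le\alpha_{m-2}Wp^{\alpha-m+1}+c_{m-1}\quad\text{and}\quad|\phi^{(m-1)}(p)|\ge\alpha_{m-2}Wp^{\alpha-m+1}+c'_{m-1}.$$
   Context: $\alpha_0=1$ and $\alpha_i=\prod_{j=1}^i(j-\alpha)$ for $i\ge1$. Here $\phi^{(0)}=\phi$. Differentiability at $1$ is one-sided. *)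

theory Defs
  imports "HOL-Analysis.Analysis"
begin

text \<open>The coefficients alpha_i: alpha_0 = 1, alpha_i = prod_{j=1..i} (j - alpha) for i >= 1.
  They are indexed by integers because the statement uses alpha_{m-2} with m >= 1.
  For i = -1 we use the unique value compatible with the recurrence
  alpha_i = (i - alpha) * alpha_{i-1} at i = 0, namely alpha_{-1} = 1/(-alpha)
  (only relevant when m = 1, which forces alpha < 0).  Other negative indices never occur.\<close>
definition alpha_coef :: "real \<Rightarrow> int \<Rightarrow> real" where
  "alpha_coef a i =
     (if i \<ge> 0 then (\<Prod>j = 1..nat i. (real j - a)) else 1 / (- a))"

end

theory Submission imports Defs begin

lemma nz: assumes "a \<notin> \<int>" shows "real j - a \<noteq> 0"
proof
  assume "real j - a = 0" then have "a = of_nat j" by simp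
  with assms show False by (metis Ints_of_nat)
qed

lemma coef_rel:
  assumes "a \<notin> \<int>" "m \<ge> 1"
  shows "(real m - 1 - a) * alpha_coef a (int m - 2) = alpha_coef a (int m - 1)"
proof (cases "m = 1")
  case True
  have "a \<noteq> 0" using assms(1) by auto
  then show ?thesis using True by (simp add: alpha_coef_def)
next
  case False
  then obtain k where k: "m = Suc (Suc k)" using assms(2)
    by (metis Suc_le_D not0_implies_Suc One_nat_def)
  have "nat (int m - 1) = Suc k" "nat (int m - 2) = k" using k by auto
  then show ?thesis using k
    by (simp add: alpha_coef_def prod.nat_ivl_Suc' algebra_simps)
qed

lemma coef_nz:
  assumes "a \<notin> \<int>" "m \<ge> 1"
  shows "alpha_coef a (int m - 1) \<noteq> 0"
  using nz[OF assms(1)] assms(2) by (simp add: alpha_coef_def)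

lemma powr_pick:
  fixes r T :: real
  assumes "r < 0" "T \<ge> 1"
  shows "\<exists>p. 0 < p \<and> p \<le> 1 \<and> p powr r = T"
proof -
  define p where "p = T powr (1 / r)"
  have "p > 0" using assms by (simp add: p_def)
  moreover have "p \<le> 1"
    using powr_mono2'[of "1/r" 1 T] assms by (simp add: p_def)
  moreover have "p powr r = T"
    using assms by (simp add: p_def powr_powr)
  ultimately show ?thesis by blast
qed

lemma powr_anti:
  fixes r :: real
  assumes "r \<le> 0" "0 < p" "p \<le> q"
  shows "q powr r \<le> p powr r"
  using powr_mono2'[OF assms] .

theorem lemma15:
  fixes a :: real and m :: nat and phi :: "real \<Rightarrow> real"
    and D :: "nat \<Rightarrow> real \<Rightarrow> real" and W c c' :: real
  assumes "a \<notin> \<int>" and "m \<ge> 1" and "real m \<ge> 1 + a"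
    and "D 0 = phi"
    and "\<forall>k<m. \<forall>p\<in>{0<..1}. (D k has_real_derivative D (Suc k) p) (at p within {0<..1})"
    and "continuous_on {0<..1} (D m)"
    and "W > 0"
    and "\<forall>p\<in>{0<..1}. \<bar>D m p\<bar> \<le> alpha_coef a (int m - 1) * W * p powr (a - real m) + c"
    and "\<forall>p\<in>{0<..1}. \<bar>D m p\<bar> \<ge> alpha_coef a (int m - 1) * W * p powr (a - real m) + c'"
  shows "\<exists>c1 c1'. \<forall>p\<in>{0<..1}.
           \<bar>D (m - 1) p\<bar> \<le> alpha_coef a (int m - 2) * W * p powr (a - real m + 1) + c1 \<and>
           \<bar>D (m - 1) p\<bar> \<ge> alpha_coef a (int m - 2) * W * p powr (a - real m + 1) + c1'"
proof -
  note hD = assms(5) and cont = assms(6) and W = assms(7) and up = assms(8) and lo = assms(9)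
  define A where "A = alpha_coef a (int m - 1)"
  define B where "B = alpha_coef a (int m - 2)"
  define e where "e = a - real m + 1"
  define r where "r = a - real m"
  have rel: "(real m - 1 - a) * B = A" unfolding A_def B_def using coef_rel assms(1,2) by blast
  have "real (m - 1) - a \<noteq> 0" using nz[OF assms(1)] by blast
  then have mpos: "real m - 1 - a > 0" using assms(2,3) by (simp add: of_nat_diff)
  have Anz: "A \<noteq> 0" unfolding A_def using coef_nz assms(1,2) by blast
  have r0: "r < 0" unfolding r_def using mpos by simp
  have Apos: "A > 0"
  proof (rule ccontr)
    assume "\<not> A > 0"
    then have An: "A < 0" using Anz by simp
    have "-A * W > 0" using An W by (simp add: mult_neg_pos)
    then have "\<bar>c\<bar> / (- A * W) \<ge> 0" by (intro divide_nonneg_pos) auto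
    then have "\<bar>c\<bar> / (- A * W) + 1 \<ge> 1" by linarith
    then obtain p where p: "0 < p" "p \<le> 1" "p powr r = \<bar>c\<bar> / (- A * W) + 1"
      using powr_pick[OF r0] by blast
    have "-A * W > 0" using An W by (simp add: mult_neg_pos)
    then have "A * W \<noteq> 0" by linarith
    then have "A * W * (\<bar>c\<bar> / (- A * W) + 1) = - \<bar>c\<bar> + A * W"
      by (simp add: field_simps)
    moreover have "A * W < 0" using An W by (simp add: mult_neg_pos)
    ultimately have "A * W * p powr r + c < 0" using p(3) by (simp add: abs_if split: if_splits)
    moreover have "\<bar>D m p\<bar> \<le> A * W * p powr r + c" using up p(1,2) unfolding A_def r_def by auto
    ultimately show False by linarith
  qed
  have Bpos: "B > 0" using rel Apos mpos by (metis zero_less_mult_pos)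
  have AW: "A * W > 0" using Apos W by simp
  define T where "T = \<bar>c'\<bar> / (A * W) + 1"
  have T1: "T \<ge> 1" unfolding T_def using AW by simp
  obtain \<epsilon> where eps: "0 < \<epsilon>" "\<epsilon> \<le> 1" "\<epsilon> powr r = T"
    using powr_pick[OF r0 T1] by blast
  have AWT: "A * W * T = \<bar>c'\<bar> + A * W" unfolding T_def using Apos W by (simp add: field_simps)
  have AWT0: "A * W * T > 0" using AW T1 by simp
  have Dnz: "D m p \<noteq> 0" if "0 < p" "p \<le> \<epsilon>" for p
  proof -
    have "p powr r \<ge> T" using powr_anti[of r p \<epsilon>] r0 that eps by simp
    then have "A * W * p powr r \<ge> A * W * T" using AW by (intro mult_left_mono) auto
    then have "A * W * p powr r + c' > 0" using AWT AW by linarith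
    moreover have "\<bar>D m p\<bar> \<ge> A * W * p powr r + c'" using lo that eps unfolding A_def r_def by auto
    ultimately show ?thesis by linarith
  qed
  define s where "s = sgn (D m \<epsilon>)"
  have sD: "D m p = s * \<bar>D m p\<bar>" if pp: "0 < p" "p \<le> \<epsilon>" for p
  proof -
    have cs: "continuous_on {p..\<epsilon>} (D m)"
      using cont by (rule continuous_on_subset) (use that eps in auto)
    have ne: "D m \<epsilon> \<noteq> 0" using Dnz eps by simp
    have np: "D m p \<noteq> 0" using Dnz that by simp
    show ?thesis
    proof (cases "D m \<epsilon> > 0")
      case True
      have "D m p > 0"
      proof (rule ccontr)
        assume "\<not> D m p > 0"
        then have "D m p \<le> 0" by simp
        then obtain x where "p \<le> x" "x \<le> \<epsilon>" "D m x = 0"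
          using IVT'[of "D m" p 0 \<epsilon>] True pp cs by auto
        then show False using Dnz pp by auto
      qed
      then show ?thesis using True by (simp add: s_def)
    next
      case False
      then have F: "D m \<epsilon> < 0" using ne by simp
      have "D m p < 0"
      proof (rule ccontr)
        assume "\<not> D m p < 0"
        then have "D m p \<ge> 0" by simp
        then obtain x where "p \<le> x" "x \<le> \<epsilon>" "D m x = 0"
          using IVT2'[of "D m" \<epsilon> 0 p] F pp cs by auto
        then show False using Dnz pp by auto
      qed
      then show ?thesis using F by (simp add: s_def)
    qed
  qed
  have s1: "\<bar>s\<bar> = 1" using Dnz eps by (simp add: s_def abs_sgn)
  define g where "g p = D (m - 1) p + s * B * W * p powr e" for p
  define g' where "g' p = D m p - s * A * W * p powr r" for p
  have Be: "B * e = - A" using rel unfolding e_def by (simp add: algebra_simps)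
  have gd: "(g has_real_derivative g' p) (at p within {0<..1})" if "p \<in> {0<..1}" for p
  proof -
    have "(D (m - 1) has_real_derivative D m p) (at p within {0<..1})"
      using hD[rule_format, of "m - 1" p] that assms(2) by simp
    moreover have "((\<lambda>p. p powr e) has_real_derivative e * p powr (e - 1)) (at p within {0<..1})"
      using has_real_derivative_powr[of p e] that by (auto intro: has_field_derivative_at_within)
    ultimately have "(g has_real_derivative D m p + s * B * W * (e * p powr (e - 1))) (at p within {0<..1})"
      unfolding g_def by (intro DERIV_add DERIV_cmult) auto
    moreover have "e - 1 = r" unfolding e_def r_def by simp
    moreover have "s * B * W * (e * p powr r) = - s * A * W * p powr r"
      using Be by (metis mult.commute mult.left_commute mult_minus_right)
    ultimately show ?thesis unfolding g'_def by simp
  qed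
  define K where "K = \<bar>c\<bar> + \<bar>c'\<bar> + 2 * A * W * T"
  have gb: "norm (g' p) \<le> K" if "p \<in> {0<..1}" for p
  proof (cases "p \<le> \<epsilon>")
    case True
    have u: "\<bar>D m p\<bar> \<le> A * W * p powr r + c" using up that unfolding A_def r_def by auto
    have l: "\<bar>D m p\<bar> \<ge> A * W * p powr r + c'" using lo that unfolding A_def r_def by auto
    have "g' p = s * (\<bar>D m p\<bar> - A * W * p powr r)"
      unfolding g'_def using sD[of p] True that by (simp add: algebra_simps)
    then have "\<bar>g' p\<bar> = \<bar>\<bar>D m p\<bar> - A * W * p powr r\<bar>" using s1 by (simp add: abs_mult)
    also have "\<dots> \<le> \<bar>c\<bar> + \<bar>c'\<bar>" using u l by linarith
    finally show ?thesis unfolding K_def using AWT0 by simp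
  next
    case False
    have u: "\<bar>D m p\<bar> \<le> A * W * p powr r + c" using up that unfolding A_def r_def by auto
    have "p powr r \<le> T" using powr_anti[of r \<epsilon> p] r0 False eps by simp
    then have pt: "A * W * p powr r \<le> A * W * T" using AW by (intro mult_left_mono) auto
    have pp: "A * W * p powr r \<ge> 0" using AW by simp
    have "\<bar>g' p\<bar> \<le> \<bar>D m p\<bar> + \<bar>s * A * W * p powr r\<bar>" unfolding g'_def by (rule abs_triangle_ineq4)
    also have "\<bar>s * A * W * p powr r\<bar> = A * W * p powr r"
      using s1 Apos W by (simp add: abs_mult)
    finally show ?thesis unfolding K_def using u pt pp by simp
  qed
  have K0: "K \<ge> 0" unfolding K_def using AWT0 by simp
  define G where "G = \<bar>g 1\<bar> + K"
  have gG: "\<bar>g p\<bar> \<le> G" if "p \<in> {0<..1}" for p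
  proof -
    have "norm (g p - g 1) \<le> K * norm (p - 1)"
      by (rule field_differentiable_bound[of "{0<..1}" g g' K]) (use gd gb that in auto)
    also have "\<dots> \<le> K" using that K0 by (auto intro: mult_left_le)
    finally show ?thesis unfolding G_def by simp
  qed
  show ?thesis
  proof (intro exI ballI)
    fix p :: real assume p: "p \<in> {0<..1}"
    have eq: "D (m - 1) p = g p - s * B * W * p powr e" unfolding g_def by simp
    have ab: "\<bar>s * B * W * p powr e\<bar> = B * W * p powr e" using s1 Bpos W by (simp add: abs_mult)
    have "\<bar>g p\<bar> \<le> G" using gG p by simp
    then have "\<bar>D (m - 1) p\<bar> \<le> B * W * p powr e + G \<and> \<bar>D (m - 1) p\<bar> \<ge> B * W * p powr e + - G"
      unfolding eq using ab by linarith
    then show "\<bar>D (m - 1) p\<bar> \<le> alpha_coef a (int m - 2) * W * p powr (a - real m + 1) + G \<and>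
           \<bar>D (m - 1) p\<bar> \<ge> alpha_coef a (int m - 2) * W * p powr (a - real m + 1) + - G"
      unfolding B_def e_def .
  qed
qed

end
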